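(* Let $f:2^V\to\mathbb{Z}_{\ge0}$ be a connectivity function, $W\subseteq V$, and $(C_1,C_2,C_3)$ a minimum $W$-improvement of arity 3. Then for every $W'\subseteq W$, $f(C_1\cap W')\le f(W')$. Moreover, if $f(C_1\cap W')=f(W')$, then $(C_1\cup W', C_2\setminus W', C_3\setminus W')$ is also a minimum $W$-improvement.
   Context: A connectivity function $f:2^V\to\mathbb{Z}_{\ge0}$ ($V$ finite) satisfies $f(\emptyset)=0$, $f(X)=f(V\setminus X)$, and $f(X\cup Y)+f(X\cap Y)\le f(X)+f(Y)$. For $W\subseteq V$, a $W$-improvement is a tripartition $(C_1,C_2,C_3)$ of $V$ (pairwise disjoint, possibly empty, union $V$) with $f(C_i)<f(W)/2$, $f(C_i\cap W)<f(W)$, $f(C_i\cap(V\setminus W))<f(W)$ for each $i$. Its width is $\max_i f(C_i)$, its sum-width is $\sum_i f(C_i)$, and its arity is the number of nonempty $C_i$. A $W$-improvement is minimum if it has minimum width among all $W$-improvements, subject to that minimum arity, and subject to those minimum sum-width. *)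

theory Defs
  imports Main
begin

definition connectivity_function :: "'a set \<Rightarrow> ('a set \<Rightarrow> nat) \<Rightarrow> bool" where
  "connectivity_function V f \<longleftrightarrow>
     finite V \<and> f {} = 0 \<and>
     (\<forall>X. X \<subseteq> V \<longrightarrow> f X = f (V - X)) \<and>
     (\<forall>X Y. X \<subseteq> V \<longrightarrow> Y \<subseteq> V \<longrightarrow> f (X \<union> Y) + f (X \<inter> Y) \<le> f X + f Y)"

definition tripartition :: "'a set \<Rightarrow> 'a set \<Rightarrow> 'a set \<Rightarrow> 'a set \<Rightarrow> bool" where
  "tripartition V C1 C2 C3 \<longleftrightarrow>
     C1 \<inter> C2 = {} \<and> C1 \<inter> C3 = {} \<and> C2 \<inter> C3 = {} \<and> C1 \<union> C2 \<union> C3 = V"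

definition good_part :: "'a set \<Rightarrow> ('a set \<Rightarrow> nat) \<Rightarrow> 'a set \<Rightarrow> 'a set \<Rightarrow> bool" where
  "good_part V f W C \<longleftrightarrow>
     2 * f C < f W \<and> f (C \<inter> W) < f W \<and> f (C \<inter> (V - W)) < f W"

definition improvement :: "'a set \<Rightarrow> ('a set \<Rightarrow> nat) \<Rightarrow> 'a set \<Rightarrow> 'a set \<Rightarrow> 'a set \<Rightarrow> 'a set \<Rightarrow> bool" where
  "improvement V f W C1 C2 C3 \<longleftrightarrow>
     tripartition V C1 C2 C3 \<and> good_part V f W C1 \<and> good_part V f W C2 \<and> good_part V f W C3"

definition width :: "('a set \<Rightarrow> nat) \<Rightarrow> 'a set \<Rightarrow> 'a set \<Rightarrow> 'a set \<Rightarrow> nat" where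
  "width f C1 C2 C3 = max (f C1) (max (f C2) (f C3))"

definition sum_width :: "('a set \<Rightarrow> nat) \<Rightarrow> 'a set \<Rightarrow> 'a set \<Rightarrow> 'a set \<Rightarrow> nat" where
  "sum_width f C1 C2 C3 = f C1 + f C2 + f C3"

definition arity :: "'a set \<Rightarrow> 'a set \<Rightarrow> 'a set \<Rightarrow> nat" where
  "arity C1 C2 C3 = card {i::nat. (i = 1 \<and> C1 \<noteq> {}) \<or> (i = 2 \<and> C2 \<noteq> {}) \<or> (i = 3 \<and> C3 \<noteq> {})}"

definition min_improvement :: "'a set \<Rightarrow> ('a set \<Rightarrow> nat) \<Rightarrow> 'a set \<Rightarrow> 'a set \<Rightarrow> 'a set \<Rightarrow> 'a set \<Rightarrow> bool" where
  "min_improvement V f W C1 C2 C3 \<longleftrightarrow>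
     improvement V f W C1 C2 C3 \<and>
     (\<forall>D1 D2 D3. improvement V f W D1 D2 D3 \<longrightarrow>
        width f C1 C2 C3 < width f D1 D2 D3 \<or>
        (width f C1 C2 C3 = width f D1 D2 D3 \<and>
          (arity C1 C2 C3 < arity D1 D2 D3 \<or>
           (arity C1 C2 C3 = arity D1 D2 D3 \<and> sum_width f C1 C2 C3 \<le> sum_width f D1 D2 D3))))"

end

theory Submission
  imports Defs
begin

lemma cf_sub:
  assumes "connectivity_function V f" "X \<subseteq> V" "Y \<subseteq> V"
  shows "f (X \<union> Y) + f (X \<inter> Y) \<le> f X + f Y"
  using assms unfolding connectivity_function_def by blast

lemma cf_sym:
  assumes "connectivity_function V f" "X \<subseteq> V"
  shows "f (V - X) = f X"
  using assms unfolding connectivity_function_def by metis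

lemma cf_posi:
  assumes cf: "connectivity_function V f" and "X \<subseteq> V" "Y \<subseteq> V"
  shows "f (X - Y) + f (Y - X) \<le> f X + f Y"
proof -
  have "f (X \<union> (V - Y)) + f (X \<inter> (V - Y)) \<le> f X + f (V - Y)"
    using cf_sub[OF cf, of X "V - Y"] assms by auto
  moreover have "X \<inter> (V - Y) = X - Y" using assms by auto
  moreover have "X \<union> (V - Y) = V - (Y - X)" using assms by auto
  moreover have "f (V - (Y - X)) = f (Y - X)" using cf_sym[OF cf, of "Y - X"] assms by auto
  moreover have "f (V - Y) = f Y" using cf_sym[OF cf] assms by auto
  ultimately show ?thesis by simp
qed

lemma arity_le3: "arity C1 C2 C3 \<le> 3"
proof -
  have "{i::nat. (i = 1 \<and> C1 \<noteq> {}) \<or> (i = 2 \<and> C2 \<noteq> {}) \<or> (i = 3 \<and> C3 \<noteq> {})} \<subseteq> {1,2,3}"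
    by auto
  from card_mono[OF _ this] show ?thesis unfolding arity_def by simp
qed

lemma core:
  assumes cf: "connectivity_function V f" and WV: "W \<subseteq> V"
    and imp: "improvement V f W C1 C2 C3" and W': "W' \<subseteq> W"
    and h1: "f W' \<le> f (C1 \<inter> W')"
    and h2: "f W' \<le> f (W' - C2)" and h3: "f W' \<le> f (W' - C3)"
  shows "improvement V f W (C1 \<union> W') (C2 - W') (C3 - W') \<and>
    f (C1 \<union> W') + f (C1 \<inter> W') \<le> f C1 + f W' \<and>
    f (C2 - W') \<le> f C2 \<and> f (C3 - W') \<le> f C3"
proof -
  have tp: "tripartition V C1 C2 C3" and g1: "good_part V f W C1"
    and g2: "good_part V f W C2" and g3: "good_part V f W C3"
    using imp unfolding improvement_def by auto
  have CV: "C1 \<subseteq> V" "C2 \<subseteq> V" "C3 \<subseteq> V" using tp unfolding tripartition_def by auto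
  have W'V: "W' \<subseteq> V" using W' WV by auto
  have tp': "tripartition V (C1 \<union> W') (C2 - W') (C3 - W')"
    using tp W'V unfolding tripartition_def by auto
  have s1: "f (C1 \<union> W') + f (C1 \<inter> W') \<le> f C1 + f W'"
    using cf_sub[OF cf CV(1) W'V] .
  have gp: "good_part V f W (C - W') \<and> f (C - W') \<le> f C"
    if gC: "good_part V f W C" and CV': "C \<subseteq> V" and hC: "f W' \<le> f (W' - C)" for C
  proof -
    have a: "f (C - W') + f (W' - C) \<le> f C + f W'" using cf_posi[OF cf CV' W'V] .
    have b: "f ((C \<inter> W) - W') + f (W' - (C \<inter> W)) \<le> f (C \<inter> W) + f W'"
      using cf_posi[OF cf _ W'V, of "C \<inter> W"] CV' by auto
    have "W' - (C \<inter> W) = W' - C" using W' by auto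
    moreover have "(C - W') \<inter> W = (C \<inter> W) - W'" by auto
    moreover have "(C - W') \<inter> (V - W) = C \<inter> (V - W)" using W' by auto
    ultimately show ?thesis using a b hC gC unfolding good_part_def by auto
  qed
  have "good_part V f W (C2 - W') \<and> f (C2 - W') \<le> f C2" using gp[OF g2 CV(2) h2] .
  moreover have "good_part V f W (C3 - W') \<and> f (C3 - W') \<le> f C3"
    using gp[OF g3 CV(3) h3] by simp
  moreover have "good_part V f W (C1 \<union> W')"
  proof -
    have c: "f ((C1 \<inter> W) \<union> W') + f ((C1 \<inter> W) \<inter> W') \<le> f (C1 \<inter> W) + f W'"
      using cf_sub[OF cf _ W'V, of "C1 \<inter> W"] CV by auto
    have "(C1 \<inter> W) \<inter> W' = C1 \<inter> W'" using W' by auto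
    moreover have "(C1 \<union> W') \<inter> W = (C1 \<inter> W) \<union> W'" using W' by auto
    moreover have "(C1 \<union> W') \<inter> (V - W) = C1 \<inter> (V - W)" using W' by auto
    ultimately show ?thesis using c s1 h1 g1 unfolding good_part_def by auto
  qed
  ultimately show ?thesis using tp' s1 unfolding improvement_def by auto
qed

lemma min_lt_False:
  assumes "min_improvement V f W C1 C2 C3" "arity C1 C2 C3 = 3"
    "improvement V f W D1 D2 D3"
    "f D1 < f C1" "f D2 \<le> f C2" "f D3 \<le> f C3"
  shows False
proof -
  have "width f D1 D2 D3 \<le> width f C1 C2 C3" using assms(4-6) unfolding width_def by auto
  moreover have "sum_width f D1 D2 D3 < sum_width f C1 C2 C3"
    using assms(4-6) unfolding sum_width_def by auto
  moreover have "arity D1 D2 D3 \<le> 3" by (rule arity_le3)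
  moreover have "width f C1 C2 C3 < width f D1 D2 D3 \<or>
        (width f C1 C2 C3 = width f D1 D2 D3 \<and>
          (arity C1 C2 C3 < arity D1 D2 D3 \<or>
           (arity C1 C2 C3 = arity D1 D2 D3 \<and> sum_width f C1 C2 C3 \<le> sum_width f D1 D2 D3)))"
    using assms(1,3) unfolding min_improvement_def by blast
  ultimately show False using assms(2) by linarith
qed

lemma min_le:
  assumes "min_improvement V f W C1 C2 C3" "arity C1 C2 C3 = 3"
    "improvement V f W D1 D2 D3"
    "f D1 \<le> f C1" "f D2 \<le> f C2" "f D3 \<le> f C3"
  shows "min_improvement V f W D1 D2 D3"
proof -
  have w: "width f D1 D2 D3 \<le> width f C1 C2 C3" using assms(4-6) unfolding width_def by auto
  have s: "sum_width f D1 D2 D3 \<le> sum_width f C1 C2 C3"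
    using assms(4-6) unfolding sum_width_def by auto
  have a: "arity D1 D2 D3 \<le> 3" by (rule arity_le3)
  have "width f C1 C2 C3 \<le> width f D1 D2 D3 \<and> (width f C1 C2 C3 = width f D1 D2 D3 \<longrightarrow>
     arity C1 C2 C3 \<le> arity D1 D2 D3 \<and> (arity C1 C2 C3 = arity D1 D2 D3 \<longrightarrow>
     sum_width f C1 C2 C3 \<le> sum_width f D1 D2 D3))"
  proof -
    have "width f C1 C2 C3 < width f D1 D2 D3 \<or>
        (width f C1 C2 C3 = width f D1 D2 D3 \<and>
          (arity C1 C2 C3 < arity D1 D2 D3 \<or>
           (arity C1 C2 C3 = arity D1 D2 D3 \<and> sum_width f C1 C2 C3 \<le> sum_width f D1 D2 D3)))"
      using assms(1,3) unfolding min_improvement_def by blast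
    then show ?thesis by auto
  qed
  then have eq: "width f D1 D2 D3 = width f C1 C2 C3" "arity D1 D2 D3 = arity C1 C2 C3"
    "sum_width f D1 D2 D3 = sum_width f C1 C2 C3" using w s a assms(2) by auto
  show ?thesis using assms(1,3) unfolding min_improvement_def eq by blast
qed

theorem lemma10:
  fixes V :: "'a set" and f :: "'a set \<Rightarrow> nat" and W W' C1 C2 C3 :: "'a set"
  assumes "connectivity_function V f"
    and "W \<subseteq> V"
    and "min_improvement V f W C1 C2 C3"
    and "arity C1 C2 C3 = 3"
    and "W' \<subseteq> W"
  shows "f (C1 \<inter> W') \<le> f W' \<and>
         (f (C1 \<inter> W') = f W' \<longrightarrow> min_improvement V f W (C1 \<union> W') (C2 - W') (C3 - W'))"
proof -
  note cf = assms(1) and WV = assms(2) and mi = assms(3) and ar = assms(4)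
  have imp: "improvement V f W C1 C2 C3" using mi unfolding min_improvement_def by (rule conjunct1)
  have tp: "tripartition V C1 C2 C3" using imp unfolding improvement_def by (rule conjunct1)
  have finV: "finite V" using cf unfolding connectivity_function_def by (rule conjunct1)
  have finW: "finite W" using finV WV by (rule finite_subset[rotated])
  have P1: "\<forall>X. X \<subseteq> W \<longrightarrow> card X = n \<longrightarrow> f (C1 \<inter> X) \<le> f X" for n
  proof (induction n rule: less_induct)
    case (less n)
    show ?case
    proof (intro allI impI)
      fix X assume XW: "X \<subseteq> W" and cX: "card X = n"
      have finX: "finite X" using finW XW by (rule finite_subset[rotated])
      show "f (C1 \<inter> X) \<le> f X"
      proof (rule ccontr)
        assume neg: "\<not> f (C1 \<inter> X) \<le> f X"
        have hC: "f X \<le> f (X - C)" if "C1 \<inter> C = {}" for C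
        proof (cases "X \<inter> C = {}")
          case True then have "X - C = X" by auto
          then show ?thesis by simp
        next
          case False
          then have "card (X - C) < card X" using finX
            by (intro psubset_card_mono) auto
          moreover have "X - C \<subseteq> W" using XW by blast
          ultimately have "f (C1 \<inter> (X - C)) \<le> f (X - C)" using less.IH[of "card (X - C)"] cX by blast
          moreover have "C1 \<inter> (X - C) = C1 \<inter> X" using that by auto
          ultimately show ?thesis using neg by simp
        qed
        have c12: "C1 \<inter> C2 = {}" "C1 \<inter> C3 = {}" using tp unfolding tripartition_def by auto
        have "improvement V f W (C1 \<union> X) (C2 - X) (C3 - X) \<and>
          f (C1 \<union> X) + f (C1 \<inter> X) \<le> f C1 + f X \<and>
          f (C2 - X) \<le> f C2 \<and> f (C3 - X) \<le> f C3"
        proof (rule core[OF cf WV imp XW _ hC[OF c12(1)] hC[OF c12(2)]])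
          show "f X \<le> f (C1 \<inter> X)" using neg by linarith
        qed
        then show False using min_lt_False[OF mi ar, of "C1 \<union> X" "C2 - X" "C3 - X"] neg
          by (meson add_le_less_mono le_less_trans not_le)
      qed
    qed
  qed
  have part1: "f (C1 \<inter> X) \<le> f X" if "X \<subseteq> W" for X using P1 that by blast
  have c12: "C1 \<inter> C2 = {}" "C1 \<inter> C3 = {}" using tp unfolding tripartition_def by auto
  have "f (C1 \<inter> W') \<le> f W'" using part1 assms(5) .
  moreover have "min_improvement V f W (C1 \<union> W') (C2 - W') (C3 - W')"
    if eq: "f (C1 \<inter> W') = f W'"
  proof -
    have hC: "f W' \<le> f (W' - C)" if "C1 \<inter> C = {}" for C
    proof -
      have "W' - C \<subseteq> W" using assms(5) by blast
      then have "f (C1 \<inter> (W' - C)) \<le> f (W' - C)" by (rule part1)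
      moreover have "C1 \<inter> (W' - C) = C1 \<inter> W'" using that by auto
      ultimately show ?thesis using eq by simp
    qed
    have "improvement V f W (C1 \<union> W') (C2 - W') (C3 - W') \<and>
          f (C1 \<union> W') + f (C1 \<inter> W') \<le> f C1 + f W' \<and>
          f (C2 - W') \<le> f C2 \<and> f (C3 - W') \<le> f C3"
    proof (rule core[OF cf WV imp assms(5) _ hC[OF c12(1)] hC[OF c12(2)]])
      show "f W' \<le> f (C1 \<inter> W')" using eq by linarith
    qed
    then show ?thesis using min_le[OF mi ar, of "C1 \<union> W'" "C2 - W'" "C3 - W'"] eq by simp
  qed
  ultimately show ?thesis by blast
qed

end
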